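(* Let $\Omega$ be a nonempty set and $\succeq$ a regular stochastic order on $\mathfrak F(\Omega)$. Then $\succeq$ is induced by an ideal of subsets of $\Omega$ if and only if there exists a weak$^*$ compact set $\mathbb P_\succeq\subset\mathbb P$ such that $\sup\{\mu(A):\mu\in\mathbb P_\succeq\}\in\{0,1\}$ for all $A\subset\Omega$ and, for all $f,g\in\mathfrak F(\Omega)$, $$f\succeq g\quad\text{if and only if}\quad\inf_{\mu\in\mathbb P_\succeq}\int(f-g)\,d\mu\ge0 .$$
   Context: $\mathfrak F(\Omega)$ is the set of real-valued functions on $\Omega$; inequalities between functions are pointwise and constants are identified with constant functions. A regular stochastic order is a reflexive, transitive binary relation $\succeq$ on $\mathfrak F(\Omega)$ such that: (TRIV) $0\not\succeq 1$; (CONE) $f_i\succeq g_i$ and $a_i\ge0$ for $i=1,2$ imply $a_1f_1+a_2f_2\succeq a_1g_1+a_2g_2$; (CERT) $f\ge0$ implies $f\succeq0$; (APPR) if $f+2^{-n}\succeq0$ for all $n\in\mathbb N$ then $f\succeq0$; (REST) $f\succeq0$ and $A\subset\Omega$ imply $f1_A\succeq0$. The order $\succeq$ is induced by an ideal if there is a family $\mathcal N$ of subsets of $\Omega$, closed under finite unions and under taking subsets, with $\Omega\notin\mathcal N$, such that $f\succeq g$ iff $\{f-g\le-\eta\}\in\mathcal N$ for every $\eta>0$. $ba$ denotes the bounded finitely additive real set functions on all subsets of $\Omega$, $\mathbb P$ the finitely additive probabilities in $ba$; the weak$^*$ topology on $ba$ is the one induced by duality with bounded functions, $\langle m,f\rangle=\int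 f\,dm$. For $\mu\in ba$ and $f\in\mathfrak F(\Omega)$, $\int f\,d\mu:=\lim_n\int[(f^+\wedge n)-(f^-\wedge n)]\,d\mu$ if this limit exists in $[-\infty,\infty]$, and $\int f\,d\mu:=\infty$ otherwise. *)

theory Defs
  imports "HOL-Analysis.Analysis"
begin

text \<open>Functions on the ground set Omega are modelled as functions on the type 'a
  (all types are nonempty).  A binary relation on such functions is a predicate R,
  where R f g means f is above g in the order.\<close>

definition regular_stochastic_order :: "(('a \<Rightarrow> real) \<Rightarrow> ('a \<Rightarrow> real) \<Rightarrow> bool) \<Rightarrow> bool" where
  "regular_stochastic_order R \<longleftrightarrow>
     (\<forall>f. R f f) \<and>
     (\<forall>f g h. R f g \<longrightarrow> R g h \<longrightarrow> R f h) \<and>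
     \<not> R (\<lambda>_. 0) (\<lambda>_. 1) \<and>
     (\<forall>f1 g1 f2 g2 (a1::real) (a2::real). R f1 g1 \<longrightarrow> R f2 g2 \<longrightarrow> a1 \<ge> 0 \<longrightarrow> a2 \<ge> 0 \<longrightarrow>
        R (\<lambda>x. a1 * f1 x + a2 * f2 x) (\<lambda>x. a1 * g1 x + a2 * g2 x)) \<and>
     (\<forall>f. (\<forall>x. f x \<ge> 0) \<longrightarrow> R f (\<lambda>_. 0)) \<and>
     (\<forall>f. (\<forall>n::nat. R (\<lambda>x. f x + 2 powi (- int n)) (\<lambda>_. 0)) \<longrightarrow> R f (\<lambda>_. 0)) \<and>
     (\<forall>f A. R f (\<lambda>_. 0) \<longrightarrow> R (\<lambda>x. f x * indicator A x) (\<lambda>_. 0))"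

definition induced_by_ideal :: "(('a \<Rightarrow> real) \<Rightarrow> ('a \<Rightarrow> real) \<Rightarrow> bool) \<Rightarrow> bool" where
  "induced_by_ideal R \<longleftrightarrow>
     (\<exists>N :: 'a set set.
        {} \<in> N \<and>
        (\<forall>A B. A \<in> N \<longrightarrow> B \<in> N \<longrightarrow> A \<union> B \<in> N) \<and>
        (\<forall>A B. A \<in> N \<longrightarrow> B \<subseteq> A \<longrightarrow> B \<in> N) \<and>
        UNIV \<notin> N \<and>
        (\<forall>f g. R f g \<longleftrightarrow> (\<forall>\<eta>>0. {x. f x - g x \<le> - \<eta>} \<in> N)))"

definition ba :: "('a set \<Rightarrow> real) set" where
  "ba = {\<mu>. (\<forall>A B. A \<inter> B = {} \<longrightarrow> \<mu> (A \<union> B) = \<mu> A + \<mu> B) \<and> (\<exists>C. \<forall>A. \<bar>\<mu> A\<bar> \<le> C)}"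

definition fa_probs :: "('a set \<Rightarrow> real) set" where
  "fa_probs = {\<mu> \<in> ba. (\<forall>A. \<mu> A \<ge> 0) \<and> \<mu> UNIV = 1}"

definition bounded_fun :: "('a \<Rightarrow> real) \<Rightarrow> bool" where
  "bounded_fun f \<longleftrightarrow> (\<exists>C. \<forall>x. \<bar>f x\<bar> \<le> C)"

definition simple_int :: "('a set \<Rightarrow> real) \<Rightarrow> ('a \<Rightarrow> real) \<Rightarrow> real" where
  "simple_int \<mu> s = (\<Sum>y\<in>range s. y * \<mu> (s -` {y}))"

text \<open>Dyadic lower approximation; finitely valued for bounded f and uniformly convergent.\<close>
definition dyadic :: "nat \<Rightarrow> ('a \<Rightarrow> real) \<Rightarrow> 'a \<Rightarrow> real" where
  "dyadic n f = (\<lambda>x. real_of_int \<lfloor>2 ^ n * f x\<rfloor> / 2 ^ n)"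

text \<open>The (Dunford--Schwartz) integral of a bounded function w.r.t. m in ba,
  as the limit of integrals of uniformly approximating simple functions.\<close>
definition ba_int :: "('a set \<Rightarrow> real) \<Rightarrow> ('a \<Rightarrow> real) \<Rightarrow> real" where
  "ba_int \<mu> f = lim (\<lambda>n. simple_int \<mu> (dyadic n f))"

definition trunc_fun :: "nat \<Rightarrow> ('a \<Rightarrow> real) \<Rightarrow> 'a \<Rightarrow> real" where
  "trunc_fun n f = (\<lambda>x. min (max (f x) 0) (real n) - min (max (- f x) 0) (real n))"

definition gen_int :: "('a set \<Rightarrow> real) \<Rightarrow> ('a \<Rightarrow> real) \<Rightarrow> ereal" where
  "gen_int \<mu> f =
     (if (\<exists>L::ereal. (\<lambda>n. ereal (ba_int \<mu> (trunc_fun n f))) \<longlonglongrightarrow> L)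
      then lim (\<lambda>n. ereal (ba_int \<mu> (trunc_fun n f))) else \<infinity>)"

definition weak_star :: "('a set \<Rightarrow> real) topology" where
  "weak_star = topology_generated_by
     {{m \<in> ba. ba_int m f \<in> U} | f U. bounded_fun f \<and> open U}"

end

theory Submission
  imports Defs
begin

lemma fa_basic:
  assumes "\<mu> \<in> fa_probs"
  shows fa_add: "A \<inter> B = {} \<Longrightarrow> \<mu> (A \<union> B) = \<mu> A + \<mu> B"
    and fa_nonneg: "\<mu> A \<ge> 0" and fa_univ: "\<mu> UNIV = 1"
  using assms unfolding fa_probs_def ba_def by auto

lemma fa_empty: "\<mu> \<in> fa_probs \<Longrightarrow> \<mu> {} = 0"
  using fa_add[of \<mu> "{}" "{}"] by simp

lemma fa_mono: assumes "\<mu> \<in> fa_probs" "A \<subseteq> B" shows "\<mu> A \<le> \<mu> B"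
proof -
  have "B = A \<union> (B - A)" using assms(2) by auto
  then have "\<mu> B = \<mu> A + \<mu> (B - A)" using fa_add[OF assms(1), of A "B - A"] by auto
  then show ?thesis using fa_nonneg[OF assms(1), of "B - A"] by simp
qed

lemma fa_compl: assumes "\<mu> \<in> fa_probs" shows "\<mu> (- A) = 1 - \<mu> A"
  using fa_add[OF assms, of A "-A"] fa_univ[OF assms] by (simp add: Un_Diff_cancel2 sup_compl_top)

lemma fa_le1: assumes "\<mu> \<in> fa_probs" shows "\<mu> A \<le> 1"
  using fa_mono[OF assms, of A UNIV] fa_univ[OF assms] by simp

lemma fa_vimage_sum:
  assumes "\<mu> \<in> fa_probs" "finite Y"
  shows "\<mu> (s -` Y) = (\<Sum>y\<in>Y. \<mu> (s -` {y}))"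
  using assms(2)
proof (induction Y rule: finite_induct)
  case empty then show ?case using fa_empty[OF assms(1)] by simp
next
  case (insert y F)
  have "s -` insert y F = s -` {y} \<union> s -` F" by auto
  moreover have "s -` {y} \<inter> s -` F = {}" using insert by auto
  ultimately show ?case using insert fa_add[OF assms(1)] by simp
qed

lemma si_gen:
  assumes "\<mu> \<in> fa_probs" "finite Y" "range s \<subseteq> Y"
  shows "simple_int \<mu> s = (\<Sum>y\<in>Y. y * \<mu> (s -` {y}))"
  unfolding simple_int_def
proof (rule sum.mono_neutral_left[OF assms(2) assms(3)])
  show "\<forall>i\<in>Y - range s. i * \<mu> (s -` {i}) = 0"
  proof
    fix i assume "i \<in> Y - range s"
    then have "s -` {i} = {}" by auto
    then show "i * \<mu> (s -` {i}) = 0" using fa_empty[OF assms(1)] by simp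
  qed
qed

lemma si_comp:
  assumes "\<mu> \<in> fa_probs" "finite Y" "range s \<subseteq> Y"
  shows "simple_int \<mu> (\<lambda>x. \<phi> (s x)) = (\<Sum>y\<in>Y. \<phi> y * \<mu> (s -` {y}))"
proof -
  have "(\<Sum>y\<in>Y. \<phi> y * \<mu> (s -` {y})) =
        (\<Sum>z\<in>\<phi> ` Y. \<Sum>y\<in>{y\<in>Y. \<phi> y = z}. \<phi> y * \<mu> (s -` {y}))"
    by (rule sum.image_gen[OF assms(2)])
  also have "\<dots> = (\<Sum>z\<in>\<phi> ` Y. z * (\<Sum>y\<in>{y\<in>Y. \<phi> y = z}. \<mu> (s -` {y})))"
    by (rule sum.cong) (auto simp: sum_distrib_left)
  also have "\<dots> = (\<Sum>z\<in>\<phi> ` Y. z * \<mu> (s -` {y\<in>Y. \<phi> y = z}))"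
  proof (rule sum.cong)
    fix z assume "z \<in> \<phi> ` Y"
    have "finite {y\<in>Y. \<phi> y = z}" using assms(2) by simp
    then show "z * (\<Sum>y\<in>{y\<in>Y. \<phi> y = z}. \<mu> (s -` {y})) = z * \<mu> (s -` {y\<in>Y. \<phi> y = z})"
      using fa_vimage_sum[OF assms(1), of "{y\<in>Y. \<phi> y = z}" s] by simp
  qed simp
  also have "\<dots> = (\<Sum>z\<in>\<phi> ` Y. z * \<mu> ((\<lambda>x. \<phi> (s x)) -` {z}))"
  proof (rule sum.cong)
    fix z assume "z \<in> \<phi> ` Y"
    have "s -` {y\<in>Y. \<phi> y = z} = (\<lambda>x. \<phi> (s x)) -` {z}" using assms(3) by auto
    then show "z * \<mu> (s -` {y\<in>Y. \<phi> y = z}) = z * \<mu> ((\<lambda>x. \<phi> (s x)) -` {z})" by simp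
  qed simp
  also have "\<dots> = simple_int \<mu> (\<lambda>x. \<phi> (s x))"
  proof -
    have "range (\<lambda>x. \<phi> (s x)) \<subseteq> \<phi> ` Y" using assms(3) by auto
    then show ?thesis using si_gen[OF assms(1), of "\<phi> ` Y" "\<lambda>x. \<phi> (s x)"] assms(2) by simp
  qed
  finally show ?thesis by simp
qed

lemma si_pair:
  assumes "\<mu> \<in> fa_probs" "finite (range s)" "finite (range t)"
  shows "simple_int \<mu> (\<lambda>x. \<phi> (s x) (t x)) =
    (\<Sum>q\<in>range s \<times> range t. \<phi> (fst q) (snd q) * \<mu> ((\<lambda>x. (s x, t x)) -` {q}))"
  using si_comp[OF assms(1), of "range s \<times> range t" "\<lambda>x. (s x, t x)" "\<lambda>q. \<phi> (fst q) (snd q)"] assms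
  by auto

lemma si_pair_fst:
  assumes "\<mu> \<in> fa_probs" "finite (range s)" "finite (range t)"
  shows "simple_int \<mu> s = (\<Sum>q\<in>range s \<times> range t. fst q * \<mu> ((\<lambda>x. (s x, t x)) -` {q}))"
  using si_pair[OF assms, of "\<lambda>a b. a"] by simp

lemma si_pair_snd:
  assumes "\<mu> \<in> fa_probs" "finite (range s)" "finite (range t)"
  shows "simple_int \<mu> t = (\<Sum>q\<in>range s \<times> range t. snd q * \<mu> ((\<lambda>x. (s x, t x)) -` {q}))"
  using si_pair[OF assms, of "\<lambda>a b. b"] by simp

lemma si_mono:
  assumes "\<mu> \<in> fa_probs" "finite (range s)" "finite (range t)" "\<And>x. s x \<le> t x"
  shows "simple_int \<mu> s \<le> simple_int \<mu> t"
  unfolding si_pair_fst[OF assms(1-3)] si_pair_snd[OF assms(1-3)]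
proof (rule sum_mono)
  fix q :: "real \<times> real"
  show "fst q * \<mu> ((\<lambda>x. (s x, t x)) -` {q}) \<le> snd q * \<mu> ((\<lambda>x. (s x, t x)) -` {q})"
  proof (cases "(\<lambda>x. (s x, t x)) -` {q} = {}")
    case True then show ?thesis using fa_empty[OF assms(1)] by simp
  next
    case False
    then obtain x where "(s x, t x) = q" by auto
    then have "fst q \<le> snd q" using assms(4) by auto
    then show ?thesis using fa_nonneg[OF assms(1)] by (simp add: mult_right_mono)
  qed
qed

lemma si_ae:
  assumes "\<mu> \<in> fa_probs" "finite (range s)" "finite (range t)" "\<mu> A = 1" "\<And>x. x \<in> A \<Longrightarrow> s x = t x"
  shows "simple_int \<mu> s = simple_int \<mu> t"
  unfolding si_pair_fst[OF assms(1-3)] si_pair_snd[OF assms(1-3)]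
proof (rule sum.cong)
  fix q :: "real \<times> real"
  show "fst q * \<mu> ((\<lambda>x. (s x, t x)) -` {q}) = snd q * \<mu> ((\<lambda>x. (s x, t x)) -` {q})"
  proof (cases "fst q = snd q")
    case True then show ?thesis by simp
  next
    case False
    then have "(\<lambda>x. (s x, t x)) -` {q} \<subseteq> - A" using assms(5) by auto
    then have "\<mu> ((\<lambda>x. (s x, t x)) -` {q}) \<le> \<mu> (- A)" by (rule fa_mono[OF assms(1)])
    also have "\<mu> (- A) = 0" using fa_compl[OF assms(1), of A] assms(4) by simp
    finally have "\<mu> ((\<lambda>x. (s x, t x)) -` {q}) = 0" using fa_nonneg[OF assms(1)] by (meson antisym)
    then show ?thesis by simp
  qed
qed simp

lemma si_const: assumes "\<mu> \<in> fa_probs" shows "simple_int \<mu> (\<lambda>_. c) = c"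
  using si_gen[OF assms, of "{c}" "\<lambda>_. c"] fa_univ[OF assms] by simp

lemma si_add_const:
  assumes "\<mu> \<in> fa_probs" "finite (range s)"
  shows "simple_int \<mu> (\<lambda>x. s x + c) = simple_int \<mu> s + c"
proof -
  have "simple_int \<mu> (\<lambda>x. s x + c) = (\<Sum>y\<in>range s. (y + c) * \<mu> (s -` {y}))"
    using si_comp[OF assms(1) assms(2), of s "\<lambda>y. y + c"] by simp
  also have "\<dots> = (\<Sum>y\<in>range s. y * \<mu> (s -` {y})) + c * (\<Sum>y\<in>range s. \<mu> (s -` {y}))"
    by (simp add: distrib_right sum.distrib sum_distrib_left)
  also have "(\<Sum>y\<in>range s. \<mu> (s -` {y})) = \<mu> (s -` range s)"
    using fa_vimage_sum[OF assms] by simp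
  also have "s -` range s = UNIV" by auto
  finally show ?thesis using fa_univ[OF assms(1)] by (simp add: simple_int_def)
qed

lemma si_ind:
  assumes "\<mu> \<in> fa_probs"
  shows "simple_int \<mu> (\<lambda>x. c * indicator A x) = c * \<mu> A"
proof -
  have r: "range (indicator A :: 'a \<Rightarrow> real) \<subseteq> {0, 1}" by (auto simp: indicator_def)
  have "simple_int \<mu> (\<lambda>x. c * indicator A x) = (\<Sum>y\<in>{0,1::real}. c * y * \<mu> (indicator A -` {y}))"
    using si_comp[OF assms _ r, of "\<lambda>y. c * y"] by simp
  moreover have "indicator A -` {1::real} = A" by (auto simp: indicator_def)
  ultimately show ?thesis by simp
qed


lemma finite_range_bounded: "finite (range s) \<Longrightarrow> bounded_fun (s :: 'a \<Rightarrow> real)"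
  unfolding bounded_fun_def
  by (rule exI[of _ "Max (abs ` range s)"]) (auto intro: Max_ge)

lemma dy_fin:
  assumes "bounded_fun f" shows "finite (range (dyadic n f))"
proof -
  obtain C where C: "\<And>x. \<bar>f x\<bar> \<le> C" using assms unfolding bounded_fun_def by auto
  have "range (dyadic n f) \<subseteq> (\<lambda>k. real_of_int k / 2 ^ n) ` {\<lfloor>- (2 ^ n * C)\<rfloor>..\<lfloor>2 ^ n * C\<rfloor>}"
  proof
    fix y assume "y \<in> range (dyadic n f)"
    then obtain x where y: "y = dyadic n f x" by auto
    have "- C \<le> f x" "f x \<le> C" using C[of x] by (auto simp: abs_le_iff)
    then have "2 ^ n * (- C) \<le> 2 ^ n * f x" "2 ^ n * f x \<le> 2 ^ n * C"
      by (intro mult_left_mono; simp)+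
    then have "- (2 ^ n * C) \<le> 2 ^ n * f x" "2 ^ n * f x \<le> 2 ^ n * C" by auto
    then have "\<lfloor>2 ^ n * f x\<rfloor> \<in> {\<lfloor>- (2 ^ n * C)\<rfloor>..\<lfloor>2 ^ n * C\<rfloor>}" by (auto intro: floor_mono)
    then show "y \<in> (\<lambda>k. real_of_int k / 2 ^ n) ` {\<lfloor>- (2 ^ n * C)\<rfloor>..\<lfloor>2 ^ n * C\<rfloor>}"
      unfolding y dyadic_def by auto
  qed
  then show ?thesis by (rule finite_subset) auto
qed

lemma dy_le: "dyadic n f x \<le> f x"
proof -
  have "real_of_int \<lfloor>2 ^ n * f x\<rfloor> \<le> 2 ^ n * f x" by simp
  then show ?thesis unfolding dyadic_def by (simp add: divide_le_eq mult.commute)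
qed

lemma dy_gt: "f x < dyadic n f x + 1 / 2 ^ n"
proof -
  have "2 ^ n * f x < real_of_int \<lfloor>2 ^ n * f x\<rfloor> + 1" by linarith
  then have "f x < (real_of_int \<lfloor>2 ^ n * f x\<rfloor> + 1) / 2 ^ n" by (simp add: less_divide_eq mult.commute)
  then show ?thesis unfolding dyadic_def by (simp add: add_divide_distrib)
qed

lemma dy_mono_f: "f x \<le> g y \<Longrightarrow> dyadic n f x \<le> dyadic n g y"
  unfolding dyadic_def by (simp add: divide_right_mono floor_mono)

lemma dy_mono_n:
  assumes "m \<le> n" shows "dyadic m f x \<le> dyadic n f x"
proof -
  let ?y = "f x"
  have p: "(2::real) ^ n = 2 ^ m * 2 ^ (n - m)" using assms by (simp flip: power_add)
  have "real_of_int (\<lfloor>2 ^ m * ?y\<rfloor> * 2 ^ (n - m)) \<le> 2 ^ m * ?y * 2 ^ (n - m)"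
    by simp
  also have "\<dots> = 2 ^ n * ?y" using p by simp
  finally have "\<lfloor>2 ^ m * ?y\<rfloor> * 2 ^ (n - m) \<le> \<lfloor>2 ^ n * ?y\<rfloor>" by (simp add: le_floor_iff)
  then have "real_of_int \<lfloor>2 ^ m * ?y\<rfloor> * 2 ^ (n - m) \<le> real_of_int \<lfloor>2 ^ n * ?y\<rfloor>"
    by (metis of_int_le_iff of_int_mult of_int_numeral of_int_power)
  then have "real_of_int \<lfloor>2 ^ m * ?y\<rfloor> * 2 ^ (n - m) / 2 ^ n \<le> real_of_int \<lfloor>2 ^ n * ?y\<rfloor> / 2 ^ n"
    by (simp add: divide_right_mono)
  also have "real_of_int \<lfloor>2 ^ m * ?y\<rfloor> * 2 ^ (n - m) / 2 ^ n = real_of_int \<lfloor>2 ^ m * ?y\<rfloor> / 2 ^ m"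
    using p by simp
  finally show ?thesis unfolding dyadic_def .
qed

lemma dy_ae: "f x = g x \<Longrightarrow> dyadic n f x = dyadic n g x"
  unfolding dyadic_def by simp

lemma fin_add_const: "finite (range s) \<Longrightarrow> finite (range (\<lambda>x. s x + (c::real)))"
proof -
  assume "finite (range s)"
  moreover have "range (\<lambda>x. s x + c) = (\<lambda>y. y + c) ` range s" by auto
  ultimately show ?thesis by simp
qed

lemma ba_conv:
  assumes mu: "\<mu> \<in> fa_probs" and f: "bounded_fun f"
  shows "incseq (\<lambda>n. simple_int \<mu> (dyadic n f))"
    and "(\<lambda>n. simple_int \<mu> (dyadic n f)) \<longlonglongrightarrow> ba_int \<mu> f"
proof -
  let ?X = "\<lambda>n. simple_int \<mu> (dyadic n f)"
  show inc: "incseq ?X"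
    unfolding incseq_def by (auto intro!: si_mono[OF mu dy_fin[OF f] dy_fin[OF f]] dy_mono_n)
  have "?X n \<le> simple_int \<mu> (dyadic 0 f) + 1" for n
  proof -
    have "?X n \<le> simple_int \<mu> (\<lambda>x. dyadic 0 f x + 1)"
    proof (rule si_mono[OF mu dy_fin[OF f] fin_add_const[OF dy_fin[OF f]]])
      fix x show "dyadic n f x \<le> dyadic 0 f x + 1"
        using dy_le[of n f x] dy_gt[of f x 0] by simp
    qed
    then show ?thesis using si_add_const[OF mu dy_fin[OF f]] by simp
  qed
  then have "bdd_above (range ?X)" by (intro bdd_aboveI2) auto
  from LIMSEQ_incseq_SUP[OF this inc] have "?X \<longlonglongrightarrow> (SUP i. ?X i)" .
  moreover then have "ba_int \<mu> f = (SUP i. ?X i)" unfolding ba_int_def by (rule limI)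
  ultimately show "?X \<longlonglongrightarrow> ba_int \<mu> f" by simp
qed

lemma ba_lower:
  assumes mu: "\<mu> \<in> fa_probs" and f: "bounded_fun f"
  shows "simple_int \<mu> (dyadic n f) \<le> ba_int \<mu> f"
  using incseq_le[OF ba_conv[OF mu f]] .

lemma ba_upper:
  assumes mu: "\<mu> \<in> fa_probs" and f: "bounded_fun f"
  shows "ba_int \<mu> f \<le> simple_int \<mu> (dyadic n f) + 1 / 2 ^ n"
proof (rule LIMSEQ_le_const2[OF ba_conv(2)[OF mu f]], intro exI allI impI)
  fix m assume "n \<le> m"
  have "simple_int \<mu> (dyadic m f) \<le> simple_int \<mu> (\<lambda>x. dyadic n f x + 1 / 2 ^ n)"
  proof (rule si_mono[OF mu dy_fin[OF f] fin_add_const[OF dy_fin[OF f]]])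
    fix x show "dyadic m f x \<le> dyadic n f x + 1 / 2 ^ n"
      using dy_le[of m f x] dy_gt[of f x n] by simp
  qed
  then show "simple_int \<mu> (dyadic m f) \<le> simple_int \<mu> (dyadic n f) + 1 / 2 ^ n"
    using si_add_const[OF mu dy_fin[OF f]] by simp
qed

lemma ba_mono:
  assumes mu: "\<mu> \<in> fa_probs" and f: "bounded_fun f" and g: "bounded_fun g" and le: "\<And>x. f x \<le> g x"
  shows "ba_int \<mu> f \<le> ba_int \<mu> g"
proof (rule LIMSEQ_le[OF ba_conv(2)[OF mu f] ba_conv(2)[OF mu g]], intro exI allI impI)
  fix n :: nat
  show "simple_int \<mu> (dyadic n f) \<le> simple_int \<mu> (dyadic n g)"
  proof (rule si_mono[OF mu dy_fin[OF f] dy_fin[OF g]])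
    fix x show "dyadic n f x \<le> dyadic n g x" by (rule dy_mono_f) (rule le)
  qed
qed

lemma ba_ae:
  assumes mu: "\<mu> \<in> fa_probs" and f: "bounded_fun f" and g: "bounded_fun g"
    and A: "\<mu> A = 1" and eq: "\<And>x. x \<in> A \<Longrightarrow> f x = g x"
  shows "ba_int \<mu> f = ba_int \<mu> g"
proof -
  have "simple_int \<mu> (dyadic n f) = simple_int \<mu> (dyadic n g)" for n
  proof (rule si_ae[OF mu dy_fin[OF f] dy_fin[OF g] A])
    fix x assume "x \<in> A" then show "dyadic n f x = dyadic n g x" by (intro dy_ae eq)
  qed
  then show ?thesis unfolding ba_int_def by simp
qed

lemma ba_simple:
  assumes mu: "\<mu> \<in> fa_probs" and s: "finite (range s)"
  shows "ba_int \<mu> s = simple_int \<mu> s"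
proof -
  have f: "bounded_fun s" using finite_range_bounded[OF s] .
  let ?X = "\<lambda>n. simple_int \<mu> (dyadic n s)"
  have up: "?X n \<le> simple_int \<mu> s" for n
    by (rule si_mono[OF mu dy_fin[OF f] s]) (rule dy_le)
  have lo: "simple_int \<mu> s - 1 / 2 ^ n \<le> ?X n" for n
  proof -
    have "simple_int \<mu> s \<le> simple_int \<mu> (\<lambda>x. dyadic n s x + 1 / 2 ^ n)"
      by (rule si_mono[OF mu s fin_add_const[OF dy_fin[OF f]]]) (rule less_imp_le[OF dy_gt])
    then show ?thesis using si_add_const[OF mu dy_fin[OF f]] by simp
  qed
  have "(\<lambda>n. simple_int \<mu> s - 1 / 2 ^ n) \<longlonglongrightarrow> simple_int \<mu> s - 0"
    by (intro tendsto_intros LIMSEQ_divide_realpow_zero) simp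
  then have l: "(\<lambda>n. simple_int \<mu> s - 1 / 2 ^ n) \<longlonglongrightarrow> simple_int \<mu> s" by simp
  have "?X \<longlonglongrightarrow> simple_int \<mu> s"
    by (rule tendsto_sandwich[OF _ _ l tendsto_const]) (simp_all add: lo up)
  then show ?thesis using LIMSEQ_unique[OF ba_conv(2)[OF mu f]] by simp
qed

lemma ba_const: "\<mu> \<in> fa_probs \<Longrightarrow> ba_int \<mu> (\<lambda>_. c) = c"
  using ba_simple[of \<mu> "\<lambda>_. c"] si_const[of \<mu> c] by simp

lemma ba_ind: "\<mu> \<in> fa_probs \<Longrightarrow> ba_int \<mu> (\<lambda>x. c * indicator A x) = c * \<mu> A"
proof -
  assume mu: "\<mu> \<in> fa_probs"
  have "range (\<lambda>x. c * indicator A x :: real) \<subseteq> {0, c}" by (auto simp: indicator_def)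
  then have "finite (range (\<lambda>x. c * indicator A x :: real))" by (rule finite_subset) simp
  then show ?thesis using ba_simple[OF mu] si_ind[OF mu] by simp
qed


lemma trunc_bounded: "bounded_fun (trunc_fun n h)"
  unfolding bounded_fun_def trunc_fun_def by (rule exI[of _ "real n"]) auto

lemma max_bounded: "bounded_fun g \<Longrightarrow> bounded_fun (\<lambda>x. max (g x) (c::real))"
  unfolding bounded_fun_def
proof -
  assume "\<exists>C. \<forall>x. \<bar>g x\<bar> \<le> C"
  then obtain C where C: "\<forall>x. \<bar>g x\<bar> \<le> C" by auto
  have "\<bar>max (g x) c\<bar> \<le> C + \<bar>c\<bar>" for x
  proof -
    have a: "\<bar>g x\<bar> \<le> C" using C by blast
    have "\<bar>max (g x) c\<bar> \<le> max \<bar>g x\<bar> \<bar>c\<bar>" by (simp add: max_def abs_if)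
    also have "\<dots> \<le> C + \<bar>c\<bar>"
    proof (rule max.boundedI)
      show "\<bar>g x\<bar> \<le> C + \<bar>c\<bar>" using a abs_ge_zero[of c] by linarith
      show "\<bar>c\<bar> \<le> C + \<bar>c\<bar>" using a abs_ge_zero[of "g x"] by linarith
    qed
    finally show ?thesis .
  qed
  then show "\<exists>C. \<forall>x. \<bar>max (g x) c\<bar> \<le> C" by blast
qed

lemma trunc_ge: "h x > - \<eta> \<Longrightarrow> \<eta> > 0 \<Longrightarrow> trunc_fun n h x \<ge> - \<eta>"
  unfolding trunc_fun_def by (auto simp: min_def max_def)

lemma gen_int_nonneg:
  assumes "\<And>n. ba_int \<mu> (trunc_fun n h) \<ge> 0"
  shows "gen_int \<mu> h \<ge> 0"
proof (cases "\<exists>L::ereal. (\<lambda>n. ereal (ba_int \<mu> (trunc_fun n h))) \<longlonglongrightarrow> L")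
  case True
  then obtain L where L: "(\<lambda>n. ereal (ba_int \<mu> (trunc_fun n h))) \<longlonglongrightarrow> L" by auto
  have "0 \<le> L" by (rule LIMSEQ_le_const[OF L]) (use assms in auto)
  then show ?thesis unfolding gen_int_def using True limI[OF L] by simp
next
  case False then show ?thesis unfolding gen_int_def by simp
qed

lemma POS:
  assumes mu: "\<mu> \<in> fa_probs" and null: "\<And>\<eta>. \<eta> > 0 \<Longrightarrow> \<mu> {x. h x \<le> - \<eta>} = 0"
  shows "gen_int \<mu> h \<ge> 0"
proof (rule gen_int_nonneg)
  fix n
  have ge: "ba_int \<mu> (trunc_fun n h) \<ge> - \<eta>" if eta: "\<eta> > 0" for \<eta>
  proof -
    let ?B = "{x. h x \<le> - \<eta>}"
    have B: "\<mu> (- ?B) = 1" using fa_compl[OF mu, of ?B] null[OF eta] by simp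
    have "ba_int \<mu> (trunc_fun n h) = ba_int \<mu> (\<lambda>x. max (trunc_fun n h x) (- \<eta>))"
    proof (rule ba_ae[OF mu trunc_bounded max_bounded[OF trunc_bounded] B])
      fix x assume "x \<in> - ?B"
      then have "h x > - \<eta>" by auto
      then have "trunc_fun n h x \<ge> - \<eta>" by (rule trunc_ge[OF _ eta])
      then show "trunc_fun n h x = max (trunc_fun n h x) (- \<eta>)" by simp
    qed
    also have "\<dots> \<ge> ba_int \<mu> (\<lambda>_. - \<eta>)"
    proof (rule ba_mono[OF mu _ max_bounded[OF trunc_bounded]])
      show "bounded_fun (\<lambda>_. - \<eta>)" unfolding bounded_fun_def by blast
      fix x show "- \<eta> \<le> max (trunc_fun n h x) (- \<eta>)" by simp
    qed
    finally show ?thesis unfolding ba_const[OF mu] .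
  qed
  show "ba_int \<mu> (trunc_fun n h) \<ge> 0"
  proof (rule ccontr)
    assume "\<not> ?thesis"
    then have "ba_int \<mu> (trunc_fun n h) < 0" by simp
    then show False using ge[of "- ba_int \<mu> (trunc_fun n h) / 2"] by linarith
  qed
qed

lemma NEG:
  assumes mu: "\<mu> \<in> fa_probs" and k: "\<And>x. k x \<le> 0" and eta: "\<eta> > 0"
    and pos: "\<mu> {x. k x \<le> - \<eta>} > 0"
  shows "gen_int \<mu> k < 0"
proof -
  let ?X = "\<lambda>n. ereal (ba_int \<mu> (trunc_fun n k))"
  have tr: "trunc_fun n k x = - min (- k x) (real n)" for n x
    using k[of x] unfolding trunc_fun_def by (simp add: max_def)
  have dec: "decseq ?X"
  proof (rule decseq_SucI)
    fix n
    have "ba_int \<mu> (trunc_fun (Suc n) k) \<le> ba_int \<mu> (trunc_fun n k)"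
      by (rule ba_mono[OF mu trunc_bounded trunc_bounded]) (simp add: tr)
    then show "?X (Suc n) \<le> ?X n" by simp
  qed
  have lim: "?X \<longlonglongrightarrow> (INF i. ?X i)" by (rule LIMSEQ_INF[OF dec])
  have "gen_int \<mu> k = (INF i. ?X i)" unfolding gen_int_def using lim limI[OF lim] by auto
  also have "\<dots> \<le> ?X 1" by (rule INF_lower) simp
  also have "ba_int \<mu> (trunc_fun 1 k) \<le> ba_int \<mu> (\<lambda>x. (- min \<eta> 1) * indicator {x. k x \<le> - \<eta>} x)"
  proof (rule ba_mono[OF mu trunc_bounded])
    show "bounded_fun (\<lambda>x. (- min \<eta> 1) * indicator {x. k x \<le> - \<eta>} x)"
      unfolding bounded_fun_def by (rule exI[of _ "\<bar>min \<eta> 1\<bar>"]) (auto simp: indicator_def)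
    fix x show "trunc_fun 1 k x \<le> (- min \<eta> 1) * indicator {x. k x \<le> - \<eta>} x"
      using k[of x] by (auto simp: tr indicator_def min_def)
  qed
  also have "\<dots> = (- min \<eta> 1) * \<mu> {x. k x \<le> - \<eta>}" by (rule ba_ind[OF mu])
  also have "\<dots> < 0" using pos eta by (simp add: mult_pos_pos)
  finally show ?thesis by (simp add: zero_ereal_def)
qed

lemma AEG:
  assumes mu: "\<mu> \<in> fa_probs" and A: "\<mu> A = 1" and eq: "\<And>x. x \<in> A \<Longrightarrow> h x = k x"
  shows "gen_int \<mu> h = gen_int \<mu> k"
proof -
  have "ba_int \<mu> (trunc_fun n h) = ba_int \<mu> (trunc_fun n k)" for n
  proof (rule ba_ae[OF mu trunc_bounded trunc_bounded A])
    fix x assume "x \<in> A" then show "trunc_fun n h x = trunc_fun n k x" by (simp add: trunc_fun_def eq)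
  qed
  then show ?thesis unfolding gen_int_def by simp
qed


lemma ULTRA:
  fixes N :: "'a set set"
  assumes emp: "{} \<in> N" and un: "\<forall>A B. A \<in> N \<longrightarrow> B \<in> N \<longrightarrow> A \<union> B \<in> N"
    and sub: "\<forall>A B. A \<in> N \<longrightarrow> B \<subseteq> A \<longrightarrow> B \<in> N" and A: "A \<notin> N"
  shows "\<exists>\<mu>\<in>fa_probs. (\<forall>B. \<mu> B \<in> {0, 1}) \<and> (\<forall>B\<in>N. \<mu> B = 0) \<and> \<mu> A = 1"
proof -
  define \<A> where "\<A> = {J :: 'a set set. N \<subseteq> J \<and> A \<notin> J \<and> (\<forall>B C. B \<in> J \<longrightarrow> C \<in> J \<longrightarrow> B \<union> C \<in> J)
     \<and> (\<forall>B C. B \<in> J \<longrightarrow> C \<subseteq> B \<longrightarrow> C \<in> J)}"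
  have "N \<in> \<A>" unfolding \<A>_def using un sub A by auto
  then have ne: "\<A> \<noteq> {}" by auto
  have "\<exists>M\<in>\<A>. \<forall>X\<in>\<A>. M \<subseteq> X \<longrightarrow> X = M"
  proof (rule subset_Zorn_nonempty[OF ne])
    fix \<C> assume C: "\<C> \<noteq> {}" "subset.chain \<A> \<C>"
    then have CA: "\<C> \<subseteq> \<A>" and ch: "\<And>X Y. X \<in> \<C> \<Longrightarrow> Y \<in> \<C> \<Longrightarrow> X \<subseteq> Y \<or> Y \<subseteq> X"
      unfolding subset.chain_def by auto
    obtain J0 where J0: "J0 \<in> \<C>" using C(1) by auto
    show "\<Union>\<C> \<in> \<A>" unfolding \<A>_def
    proof (intro CollectI conjI allI impI)
      have "N \<subseteq> J0" using J0 CA unfolding \<A>_def by auto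
      then show "N \<subseteq> \<Union>\<C>" using J0 by auto
      show "A \<notin> \<Union>\<C>" using CA unfolding \<A>_def by auto
    next
      fix B C assume "B \<in> \<Union>\<C>" "C \<in> \<Union>\<C>"
      then obtain J1 J2 where J: "J1 \<in> \<C>" "J2 \<in> \<C>" "B \<in> J1" "C \<in> J2" by auto
      then have "J1 \<subseteq> J2 \<or> J2 \<subseteq> J1" using ch by auto
      then show "B \<union> C \<in> \<Union>\<C>"
      proof
        assume "J1 \<subseteq> J2" then have "B \<in> J2" "C \<in> J2" "J2 \<in> \<A>" using J CA by auto
        then have "B \<union> C \<in> J2" unfolding \<A>_def by auto
        then show ?thesis using J by auto
      next
        assume "J2 \<subseteq> J1" then have "B \<in> J1" "C \<in> J1" "J1 \<in> \<A>" using J CA by auto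
        then have "B \<union> C \<in> J1" unfolding \<A>_def by auto
        then show ?thesis using J by auto
      qed
    next
      fix B C assume "B \<in> \<Union>\<C>" "C \<subseteq> B"
      then obtain J1 where J: "J1 \<in> \<C>" "B \<in> J1" by auto
      then have "J1 \<in> \<A>" using CA by auto
      then have "C \<in> J1" using J \<open>C \<subseteq> B\<close> unfolding \<A>_def by auto
      then show "C \<in> \<Union>\<C>" using J by auto
    qed
  qed
  then obtain M where MA: "M \<in> \<A>" and max: "\<And>X. X \<in> \<A> \<Longrightarrow> M \<subseteq> X \<Longrightarrow> X = M" by auto
  have NM: "N \<subseteq> M" and AM: "A \<notin> M" and unM: "\<And>B C. B \<in> M \<Longrightarrow> C \<in> M \<Longrightarrow> B \<union> C \<in> M"
    and subM: "\<And>B C. B \<in> M \<Longrightarrow> C \<subseteq> B \<Longrightarrow> C \<in> M" using MA unfolding \<A>_def by auto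
  have ext: "A \<in> {C. \<exists>D\<in>M. C \<subseteq> D \<union> X} \<or> X \<in> M" for X
  proof (cases "A \<in> {C. \<exists>D\<in>M. C \<subseteq> D \<union> X}")
    case False
    let ?MX = "{C. \<exists>D\<in>M. C \<subseteq> D \<union> X}"
    have "?MX \<in> \<A>" unfolding \<A>_def
    proof (rule CollectI, intro conjI allI impI)
      show "N \<subseteq> ?MX" using NM by auto
      show "A \<notin> ?MX" using False .
    next
      fix B C assume "B \<in> ?MX" "C \<in> ?MX"
      then obtain D1 D2 where "D1 \<in> M" "D2 \<in> M" "B \<subseteq> D1 \<union> X" "C \<subseteq> D2 \<union> X" by auto
      then show "B \<union> C \<in> ?MX" using unM[of D1 D2] by (intro CollectI bexI[of _ "D1 \<union> D2"]) auto
    next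
      fix B C assume "B \<in> ?MX" "C \<subseteq> B" then show "C \<in> ?MX" by auto
    qed
    moreover have "M \<subseteq> ?MX" by auto
    ultimately have "?MX = M" using max by blast
    moreover have "X \<in> ?MX" using emp NM by auto
    ultimately show ?thesis by auto
  qed simp
  have ultra: "B \<in> M \<or> - B \<in> M" for B
  proof (rule ccontr)
    assume "\<not> ?thesis"
    then have "A \<in> {C. \<exists>D\<in>M. C \<subseteq> D \<union> B}" "A \<in> {C. \<exists>D\<in>M. C \<subseteq> D \<union> - B}"
      using ext[of B] ext[of "- B"] by auto
    then obtain D1 D2 where "D1 \<in> M" "D2 \<in> M" "A \<subseteq> D1 \<union> B" "A \<subseteq> D2 \<union> - B" by auto
    then have "A \<subseteq> D1 \<union> D2" "D1 \<union> D2 \<in> M" using unM by auto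
    then show False using subM AM by blast
  qed
  define \<mu> :: "'a set \<Rightarrow> real" where "\<mu> B = (if B \<in> M then 0 else 1)" for B
  have add: "\<mu> (B \<union> C) = \<mu> B + \<mu> C" if "B \<inter> C = {}" for B C
  proof (cases "B \<in> M")
    case True
    show ?thesis
    proof (cases "C \<in> M")
      case True
      then show ?thesis using \<open>B \<in> M\<close> unM unfolding \<mu>_def by auto
    next
      case False
      then have "- C \<in> M" using ultra by auto
      then have "B \<union> C \<notin> M" using False subM by blast
      then show ?thesis using \<open>B \<in> M\<close> False unfolding \<mu>_def by auto
    qed
  next
    case False
    then have "- B \<in> M" using ultra by auto
    then have "C \<in> M" using subM that by blast
    have "B \<union> C \<notin> M" using False subM by blast
    then show ?thesis using \<open>C \<in> M\<close> False unfolding \<mu>_def by auto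
  qed
  have UM: "UNIV \<notin> M" using AM subM by blast
  have "\<mu> \<in> fa_probs" unfolding fa_probs_def ba_def
    using add UM by (auto simp: \<mu>_def intro!: exI[of _ 1])
  moreover have "\<forall>B. \<mu> B \<in> {0, 1}" by (simp add: \<mu>_def)
  moreover have "\<forall>B\<in>N. \<mu> B = 0" using NM by (auto simp: \<mu>_def)
  moreover have "\<mu> A = 1" using AM by (simp add: \<mu>_def)
  ultimately show ?thesis by blast
qed


lemma coord_cont: "continuous_on S (\<lambda>\<mu>::'a set \<Rightarrow> real. \<mu> B)"
  by (rule continuous_on_subset[OF continuous_on_product_coordinates]) simp

lemma ba_int_cont:
  assumes f: "bounded_fun f" and P: "P \<subseteq> fa_probs"
  shows "continuous_on P (\<lambda>\<mu>. ba_int \<mu> f)"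
proof (rule uniform_limit_theorem[where F = sequentially and f = "\<lambda>n \<mu>. simple_int \<mu> (dyadic n f)"])
  show "\<forall>\<^sub>F n in sequentially. continuous_on P (\<lambda>\<mu>. simple_int \<mu> (dyadic n f))"
    unfolding simple_int_def
    by (intro always_eventually allI continuous_on_sum continuous_on_mult continuous_on_const coord_cont)
  show "uniform_limit P (\<lambda>n \<mu>. simple_int \<mu> (dyadic n f)) (\<lambda>\<mu>. ba_int \<mu> f) sequentially"
  proof (rule uniform_limitI)
    fix e :: real assume e: "e > 0"
    have "(\<lambda>n. 1 / 2 ^ n :: real) \<longlonglongrightarrow> 0" by (rule LIMSEQ_divide_realpow_zero) simp
    then have ev: "\<forall>\<^sub>F n in sequentially. 1 / 2 ^ n < e" using e by (rule order_tendstoD(2))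
    show "\<forall>\<^sub>F n in sequentially. \<forall>\<mu>\<in>P. dist (simple_int \<mu> (dyadic n f)) (ba_int \<mu> f) < e"
    proof (rule eventually_mono[OF ev], intro ballI)
      fix n :: nat and \<mu> assume n: "1 / 2 ^ n < e" and mu: "\<mu> \<in> P"
      have "\<mu> \<in> fa_probs" using mu P by auto
      then have "simple_int \<mu> (dyadic n f) \<le> ba_int \<mu> f" "ba_int \<mu> f \<le> simple_int \<mu> (dyadic n f) + 1 / 2 ^ n"
        using ba_lower ba_upper f by blast+
      then show "dist (simple_int \<mu> (dyadic n f)) (ba_int \<mu> f) < e" using n by (simp add: dist_real_def)
    qed
  qed
qed simp

lemma weak_star_cont:
  fixes P :: "('a set \<Rightarrow> real) set"
  assumes PF: "P \<subseteq> fa_probs"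
  shows "continuous_map (top_of_set P) weak_star id"
  unfolding weak_star_def
proof (rule continuous_on_generated_topo)
  have Pba: "P \<subseteq> ba" using PF unfolding fa_probs_def by blast
  have "(ba :: ('a set \<Rightarrow> real) set) \<in> {{m \<in> ba. ba_int m f \<in> U} |f U. bounded_fun f \<and> open U}"
  proof -
    have "(ba :: ('a set \<Rightarrow> real) set) = {m \<in> ba. ba_int m (\<lambda>_::'a. 0) \<in> UNIV}" by simp
    moreover have "bounded_fun (\<lambda>_::'a. 0::real)" unfolding bounded_fun_def by (rule exI[of _ 0]) simp
    ultimately have "\<exists>f U. (ba :: ('a set \<Rightarrow> real) set) = {m \<in> ba. ba_int m f \<in> U} \<and> bounded_fun f \<and> open U"
      by (intro exI[where x="\<lambda>_::'a. 0::real"] exI[where x="UNIV :: real set"]) simp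
    then show ?thesis by simp
  qed
  note baS = this
  show "id ` topspace (top_of_set P) \<subseteq> \<Union> {{m \<in> ba. ba_int m f \<in> U} |f U. bounded_fun f \<and> open U}"
  proof (rule subsetI)
    fix x assume "x \<in> id ` topspace (top_of_set P)"
    then have "x \<in> ba" using Pba by auto
    then show "x \<in> \<Union> {{m \<in> ba. ba_int m f \<in> U} |f U. bounded_fun f \<and> open U}"
      using baS by (rule UnionI[rotated])
  qed
  fix W :: "('a set \<Rightarrow> real) set" assume "W \<in> {{m \<in> ba. ba_int m f \<in> U} |f U. bounded_fun f \<and> open U}"
  then obtain f :: "'a \<Rightarrow> real" and V :: "real set" where U: "W = {m \<in> ba. ba_int m f \<in> V}" and f: "bounded_fun f" and V: "open V"
    by (elim CollectE exE conjE) blast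
  have "continuous_map (top_of_set P) euclidean (\<lambda>\<mu>. ba_int \<mu> f)"
    unfolding continuous_map_iff_continuous by (rule ba_int_cont[OF f PF])
  moreover have "openin euclidean V" using V by simp
  ultimately have "openin (top_of_set P) {x \<in> topspace (top_of_set P). ba_int x f \<in> V}"
    by (rule openin_continuous_map_preimage)
  moreover have "{x \<in> topspace (top_of_set P). ba_int x f \<in> V} = id -` W \<inter> topspace (top_of_set P)"
    using Pba unfolding U by auto
  ultimately show "openin (top_of_set P) (id -` W \<inter> topspace (top_of_set P))" by simp
qed

lemma COMPACT:
  fixes N :: "'a set set"
  shows "compactin weak_star {\<mu>\<in>fa_probs. (\<forall>B. \<mu> B \<in> {0, 1}) \<and> (\<forall>B\<in>N. \<mu> B = 0)}"
proof -
  define P where "P = {\<mu>\<in>fa_probs. (\<forall>B. \<mu> B \<in> {0, 1}) \<and> (\<forall>B\<in>N. \<mu> B = 0)}"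
  define Q :: "('a set \<Rightarrow> real) set" where "Q = {\<mu>. (\<forall>A B. A \<inter> B = {} \<longrightarrow> \<mu> (A \<union> B) = \<mu> A + \<mu> B)
      \<and> (\<forall>B. \<mu> B \<in> {0, 1}) \<and> \<mu> UNIV = 1 \<and> (\<forall>B. B \<in> N \<longrightarrow> \<mu> B = 0)}"
  have PQ: "P = Q"
  proof
    show "P \<subseteq> Q" unfolding P_def Q_def fa_probs_def ba_def by auto
    show "Q \<subseteq> P"
    proof
      fix \<mu> assume "\<mu> \<in> Q"
      then have q: "\<forall>A B. A \<inter> B = {} \<longrightarrow> \<mu> (A \<union> B) = \<mu> A + \<mu> B" "\<forall>B. \<mu> B \<in> {0, 1}" "\<mu> UNIV = 1"
        "\<forall>B. B \<in> N \<longrightarrow> \<mu> B = 0" unfolding Q_def by auto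
      have "\<forall>A. \<bar>\<mu> A\<bar> \<le> 1" "\<forall>A. \<mu> A \<ge> 0" using q(2) by (metis abs_zero abs_one insertE order_refl singletonD zero_le_one)+
      then show "\<mu> \<in> P" unfolding P_def fa_probs_def ba_def using q by blast
    qed
  qed
  have cl: "closed Q" unfolding Q_def
  proof (intro closed_Collect_conj closed_Collect_all)
    fix A B :: "'a set"
    show "closed {\<mu>::'a set \<Rightarrow> real. A \<inter> B = {} \<longrightarrow> \<mu> (A \<union> B) = \<mu> A + \<mu> B}"
    proof (cases "A \<inter> B = {}")
      case True
      have "closed {\<mu>::'a set \<Rightarrow> real. \<mu> (A \<union> B) = \<mu> A + \<mu> B}"
        by (intro closed_Collect_eq continuous_on_add coord_cont)
      then show ?thesis using True by simp
    next
      case False then show ?thesis by simp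
    qed
  next
    fix B :: "'a set"
    have "{\<mu>::'a set \<Rightarrow> real. \<mu> B \<in> {0, 1}} = (\<lambda>\<mu>. \<mu> B) -` {0, 1}" by auto
    moreover have "closed ((\<lambda>\<mu>::'a set \<Rightarrow> real. \<mu> B) -` {0, 1})"
      by (rule closed_vimage) (simp_all add: finite_imp_closed coord_cont)
    ultimately show "closed {\<mu>::'a set \<Rightarrow> real. \<mu> B \<in> {0, 1}}" by simp
  next
    show "closed {\<mu>::'a set \<Rightarrow> real. \<mu> UNIV = 1}"
      by (intro closed_Collect_eq coord_cont continuous_on_const)
  next
    fix B :: "'a set"
    show "closed {\<mu>::'a set \<Rightarrow> real. B \<in> N \<longrightarrow> \<mu> B = 0}"
    proof (cases "B \<in> N")
      case True
      have "closed {\<mu>::'a set \<Rightarrow> real. \<mu> B = 0}" by (intro closed_Collect_eq coord_cont continuous_on_const)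
      then show ?thesis using True by simp
    qed simp
  qed
  have K: "compact (PiE UNIV (\<lambda>_::'a set. {0..1::real}))"
  proof -
    have "compactin (product_topology (\<lambda>_::'a set. euclideanreal) UNIV) (PiE UNIV (\<lambda>_::'a set. {0..1::real}))"
      by (simp add: compactin_PiE)
    then show ?thesis by (simp add: euclidean_product_topology)
  qed
  have "Q \<subseteq> PiE UNIV (\<lambda>_::'a set. {0..1::real})" unfolding Q_def
  proof (auto simp: PiE_UNIV_domain)
    fix x :: "'a set \<Rightarrow> real" and B assume "\<forall>B. x B = 0 \<or> x B = 1"
    then have "x B = 0 \<or> x B = 1" by blast
    then show "0 \<le> x B" "x B \<le> 1" by auto
  qed
  then have "PiE UNIV (\<lambda>_::'a set. {0..1::real}) \<inter> Q = Q" by auto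
  then have cQ: "compact Q" using compact_Int_closed[OF K cl] by simp
  have PF: "P \<subseteq> fa_probs" unfolding P_def by auto
  have c1: "compactin (top_of_set P) P" using cQ PQ by (simp add: compactin_subtopology)
  have c2: "continuous_map (top_of_set P) weak_star id" by (rule weak_star_cont[OF PF])
  have "compactin weak_star (id ` P)" by (rule image_compactin[OF c1 c2])
  then show ?thesis unfolding P_def by simp
qed



lemma reg_diff:
  assumes reg: "regular_stochastic_order R" and fg: "R f g"
  shows "R (\<lambda>x. f x - g x) (\<lambda>_. 0)"
proof -
  have r: "\<forall>f. R f f" using reg unfolding regular_stochastic_order_def by (elim conjE) assumption
  have c: "\<forall>f1 g1 f2 g2 (a1::real) (a2::real). R f1 g1 \<longrightarrow> R f2 g2 \<longrightarrow> a1 \<ge> 0 \<longrightarrow> a2 \<ge> 0 \<longrightarrow>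
        R (\<lambda>x. a1 * f1 x + a2 * f2 x) (\<lambda>x. a1 * g1 x + a2 * g2 x)"
    using reg unfolding regular_stochastic_order_def by (elim conjE) assumption
  have h: "R (\<lambda>x. - g x) (\<lambda>x. - g x)" using r by (rule spec)
  have e1: "(\<lambda>x. 1 * f x + 1 * (- g x)) = (\<lambda>x. f x - g x)" by (rule ext) simp
  have e2: "(\<lambda>x. 1 * g x + 1 * (- g x)) = (\<lambda>x. 0::real)" by (rule ext) simp
  have "R (\<lambda>x. 1 * f x + 1 * (- g x)) (\<lambda>x. 1 * g x + 1 * (- g x))"
    using c[rule_format, of f g "\<lambda>x. - g x" "\<lambda>x. - g x" 1 1] fg h by simp
  then show ?thesis unfolding e1 e2 .
qed

theorem lemma2:
  fixes R :: "('a \<Rightarrow> real) \<Rightarrow> ('a \<Rightarrow> real) \<Rightarrow> bool"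
  assumes "regular_stochastic_order R"
  shows "induced_by_ideal R \<longleftrightarrow>
    (\<exists>P \<subseteq> fa_probs. compactin weak_star P \<and>
       (\<forall>A. (SUP \<mu>\<in>P. ereal (\<mu> A)) \<in> {0, 1}) \<and>
       (\<forall>f g. R f g \<longleftrightarrow> (INF \<mu>\<in>P. gen_int \<mu> (\<lambda>x. f x - g x)) \<ge> 0))"
proof
  assume "induced_by_ideal R"
  then obtain N :: "'a set set" where emp: "{} \<in> N" and un: "\<forall>A B. A \<in> N \<longrightarrow> B \<in> N \<longrightarrow> A \<union> B \<in> N"
    and sub: "\<forall>A B. A \<in> N \<longrightarrow> B \<subseteq> A \<longrightarrow> B \<in> N" and UN: "UNIV \<notin> N"
    and ch0: "\<forall>f g. R f g \<longleftrightarrow> (\<forall>\<eta>>0. {x. f x - g x \<le> - \<eta>} \<in> N)"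
    unfolding induced_by_ideal_def by (elim exE conjE) (rule that)
  note ch = ch0[rule_format]
  define P where "P = {\<mu>\<in>fa_probs. (\<forall>B. \<mu> B \<in> {0, 1}) \<and> (\<forall>B\<in>N. \<mu> B = 0)}"
  have PF: "P \<subseteq> fa_probs" unfolding P_def by auto
  have cP: "compactin weak_star P" unfolding P_def by (rule COMPACT)
  have ult: "\<exists>\<mu>\<in>P. \<mu> A = 1" if "A \<notin> N" for A
    using ULTRA[OF emp un sub that] unfolding P_def by auto
  have Pne: "P \<noteq> {}" using ult[OF UN] by auto
  have sup: "(SUP \<mu>\<in>P. ereal (\<mu> A)) \<in> {0, 1}" for A
  proof (cases "A \<in> N")
    case True
    have z: "\<And>\<mu>. \<mu> \<in> P \<Longrightarrow> ereal (\<mu> A) = 0" using True unfolding P_def by simp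
    have "(SUP \<mu>\<in>P. ereal (\<mu> A)) = (SUP \<mu>\<in>P. (0::ereal))" by (rule SUP_cong[OF refl z])
    also have "\<dots> = 0" by (rule SUP_const[OF Pne])
    finally show ?thesis by simp
  next
    case False
    then obtain \<mu>1 where m1: "\<mu>1 \<in> P" "\<mu>1 A = 1" using ult by blast
    have "ereal (\<mu>1 A) \<le> (SUP \<mu>\<in>P. ereal (\<mu> A))" by (rule SUP_upper[OF m1(1)])
    then have ge: "1 \<le> (SUP \<mu>\<in>P. ereal (\<mu> A))" using m1(2) by (simp add: one_ereal_def)
    have le: "(SUP \<mu>\<in>P. ereal (\<mu> A)) \<le> 1"
    proof (rule SUP_least)
      fix \<mu> assume "\<mu> \<in> P"
      then have "\<mu> \<in> fa_probs" by (rule subsetD[OF PF])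
      then have "\<mu> A \<le> 1" by (rule fa_le1)
      then show "ereal (\<mu> A) \<le> 1" by simp
    qed
    from ge le have "(SUP \<mu>\<in>P. ereal (\<mu> A)) = 1" by (rule antisym[rotated])
    then show ?thesis by simp
  qed
  have char: "R f g \<longleftrightarrow> (INF \<mu>\<in>P. gen_int \<mu> (\<lambda>x. f x - g x)) \<ge> 0" for f g
  proof
    assume "R f g"
    then have nul: "\<forall>\<eta>>0. {x. f x - g x \<le> - \<eta>} \<in> N" using ch[of f g] by (rule iffD1[rotated])
    show "(INF \<mu>\<in>P. gen_int \<mu> (\<lambda>x. f x - g x)) \<ge> 0"
    proof (rule INF_greatest)
      fix \<mu> assume mu: "\<mu> \<in> P"
      show "0 \<le> gen_int \<mu> (\<lambda>x. f x - g x)"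
      proof (rule POS)
        show "\<mu> \<in> fa_probs" using mu PF by auto
        fix \<eta> :: real assume "\<eta> > 0"
        then have "{x. f x - g x \<le> - \<eta>} \<in> N" using nul by blast
        then show "\<mu> {x. f x - g x \<le> - \<eta>} = 0" using mu unfolding P_def by blast
      qed
    qed
  next
    assume inf: "(INF \<mu>\<in>P. gen_int \<mu> (\<lambda>x. f x - g x)) \<ge> 0"
    show "R f g" unfolding ch
    proof (intro allI impI, rule ccontr)
      fix \<eta> :: real assume eta: "\<eta> > 0" and nA: "{x. f x - g x \<le> - \<eta>} \<notin> N"
      let ?A = "{x. f x - g x \<le> - \<eta>}"
      obtain \<mu> where mu: "\<mu> \<in> P" "\<mu> ?A = 1" using ult[OF nA] by blast
      have muF: "\<mu> \<in> fa_probs" using mu PF by auto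
      have "gen_int \<mu> (\<lambda>x. f x - g x) \<ge> 0"
        using inf INF_lower[OF mu(1), of "\<lambda>\<mu>. gen_int \<mu> (\<lambda>x. f x - g x)"] by (rule order_trans)
      moreover have "gen_int \<mu> (\<lambda>x. f x - g x) = gen_int \<mu> (\<lambda>x. min (f x - g x) 0)"
      proof (rule AEG[OF muF mu(2)])
        fix x assume "x \<in> ?A" then show "f x - g x = min (f x - g x) 0" using eta by auto
      qed
      moreover have "gen_int \<mu> (\<lambda>x. min (f x - g x) 0) < 0"
      proof (rule NEG[OF muF _ eta])
        fix x show "min (f x - g x) 0 \<le> 0" by simp
      next
        have "\<mu> ?A \<le> \<mu> {x. min (f x - g x) 0 \<le> - \<eta>}" by (rule fa_mono[OF muF]) auto
        then show "\<mu> {x. min (f x - g x) 0 \<le> - \<eta>} > 0" using mu(2) by simp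
      qed
      ultimately show False by simp
    qed
  qed
  show "\<exists>P \<subseteq> fa_probs. compactin weak_star P \<and>
       (\<forall>A. (SUP \<mu>\<in>P. ereal (\<mu> A)) \<in> {0, 1}) \<and>
       (\<forall>f g. R f g \<longleftrightarrow> (INF \<mu>\<in>P. gen_int \<mu> (\<lambda>x. f x - g x)) \<ge> 0)"
    by (rule exI[of _ P], intro conjI PF cP allI sup char)
next
  assume "\<exists>P \<subseteq> fa_probs. compactin weak_star P \<and>
       (\<forall>A. (SUP \<mu>\<in>P. ereal (\<mu> A)) \<in> {0, 1}) \<and>
       (\<forall>f g. R f g \<longleftrightarrow> (INF \<mu>\<in>P. gen_int \<mu> (\<lambda>x. f x - g x)) \<ge> 0)"
  then obtain P where PF: "P \<subseteq> fa_probs" and cp: "compactin weak_star P" and sup0: "\<forall>A. (SUP \<mu>\<in>P. ereal (\<mu> A)) \<in> {0, 1}"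
    and ch0: "\<forall>f g. R f g \<longleftrightarrow> (INF \<mu>\<in>P. gen_int \<mu> (\<lambda>x. f x - g x)) \<ge> 0" by (elim exE conjE) (rule that)
  note sup = sup0[rule_format] and ch = ch0[rule_format]
  have Pne: "P \<noteq> {}"
  proof
    assume "P = {}"
    then have "(SUP \<mu>\<in>P. ereal (\<mu> UNIV)) = - \<infinity>" by (simp add: bot_ereal_def)
    then show False using sup[of UNIV] by simp
  qed
  define N where "N = {A. \<forall>\<mu>\<in>P. \<mu> A = 0}"
  have emp: "{} \<in> N" unfolding N_def using PF fa_empty by blast
  have un: "\<forall>A B. A \<in> N \<longrightarrow> B \<in> N \<longrightarrow> A \<union> B \<in> N"
  proof (intro allI impI)
    fix A B assume "A \<in> N" "B \<in> N"
    show "A \<union> B \<in> N" unfolding N_def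
    proof (rule CollectI, rule ballI)
      fix \<mu> assume mu: "\<mu> \<in> P"
      then have muF: "\<mu> \<in> fa_probs" using PF by auto
      have "A \<union> B = A \<union> (B - A)" by auto
      then have "\<mu> (A \<union> B) = \<mu> A + \<mu> (B - A)" using fa_add[OF muF, of A "B - A"] by auto
      moreover have "\<mu> (B - A) \<le> \<mu> B" by (rule fa_mono[OF muF]) auto
      moreover have "\<mu> A = 0" "\<mu> B = 0" using \<open>A \<in> N\<close> \<open>B \<in> N\<close> mu unfolding N_def by auto
      moreover have "\<mu> (A \<union> B) \<ge> 0" by (rule fa_nonneg[OF muF])
      ultimately show "\<mu> (A \<union> B) = 0" by linarith
    qed
  qed
  have sub: "\<forall>A B. A \<in> N \<longrightarrow> B \<subseteq> A \<longrightarrow> B \<in> N"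
  proof (intro allI impI)
    fix A B assume "A \<in> N" "B \<subseteq> A"
    show "B \<in> N" unfolding N_def
    proof (rule CollectI, rule ballI)
      fix \<mu> assume mu: "\<mu> \<in> P"
      then have muF: "\<mu> \<in> fa_probs" using PF by auto
      have "\<mu> B \<le> \<mu> A" by (rule fa_mono[OF muF \<open>B \<subseteq> A\<close>])
      moreover have "\<mu> A = 0" using \<open>A \<in> N\<close> mu unfolding N_def by auto
      moreover have "\<mu> B \<ge> 0" by (rule fa_nonneg[OF muF])
      ultimately show "\<mu> B = 0" by linarith
    qed
  qed
  have UN: "UNIV \<notin> N"
  proof
    assume "UNIV \<in> N"
    obtain \<mu> where mu: "\<mu> \<in> P" using Pne by auto
    then have "\<mu> UNIV = 0" using \<open>UNIV \<in> N\<close> unfolding N_def by simp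
    moreover have "\<mu> UNIV = 1" by (rule fa_univ[OF subsetD[OF PF mu]])
    ultimately show False by simp
  qed
  have char: "R f g \<longleftrightarrow> (\<forall>\<eta>>0. {x. f x - g x \<le> - \<eta>} \<in> N)" for f g
  proof
    assume fg: "R f g"
    show "\<forall>\<eta>>0. {x. f x - g x \<le> - \<eta>} \<in> N"
    proof (intro allI impI)
      fix \<eta> :: real assume eta: "\<eta> > 0"
      let ?A = "{x. f x - g x \<le> - \<eta>}"
      show "?A \<in> N" unfolding N_def
      proof (rule CollectI, rule ballI, rule ccontr)
        fix \<mu> assume mu: "\<mu> \<in> P" and ne: "\<mu> ?A \<noteq> 0"
        have muF: "\<mu> \<in> fa_probs" using mu PF by auto
        let ?k = "\<lambda>x. (f x - g x) * indicator ?A x"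
        have s: "\<forall>f A. R f (\<lambda>_. 0) \<longrightarrow> R (\<lambda>x. f x * indicator A x) (\<lambda>_. 0)"
          using assms unfolding regular_stochastic_order_def by (elim conjE) assumption
        have "R (\<lambda>x. f x - g x) (\<lambda>_. 0)" by (rule reg_diff[of R f g, OF assms fg])
        then have "R ?k (\<lambda>_. 0)" by (rule s[rule_format])
        then have "(INF \<mu>\<in>P. gen_int \<mu> (\<lambda>x. ?k x - 0)) \<ge> 0" using ch[of ?k "\<lambda>_. 0"] by (rule iffD1[rotated])
        then have "gen_int \<mu> (\<lambda>x. ?k x - 0) \<ge> 0"
          using INF_lower[OF mu, of "\<lambda>\<mu>. gen_int \<mu> (\<lambda>x. ?k x - 0)"] by (rule order_trans)
        moreover have "gen_int \<mu> ?k < 0"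
        proof (rule NEG[OF muF _ eta])
          fix x show "?k x \<le> 0"
          proof (cases "x \<in> ?A")
            case True then have "f x - g x \<le> - \<eta>" by simp
            then show ?thesis using True eta by simp
          next
            case False then show ?thesis by simp
          qed
        next
          have "{x. ?k x \<le> - \<eta>} = ?A"
          proof (rule set_eqI)
            fix x show "x \<in> {x. ?k x \<le> - \<eta>} \<longleftrightarrow> x \<in> ?A"
              using eta by (cases "x \<in> ?A") simp_all
          qed
          moreover have "\<mu> ?A > 0" using ne fa_nonneg[OF muF, of ?A] by linarith
          ultimately show "\<mu> {x. ?k x \<le> - \<eta>} > 0" by simp
        qed
        moreover have "(\<lambda>x. ?k x - 0) = ?k" by simp
        ultimately show False by simp
      qed
    qed
  next
    assume nul: "\<forall>\<eta>>0. {x. f x - g x \<le> - \<eta>} \<in> N"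
    have "(INF \<mu>\<in>P. gen_int \<mu> (\<lambda>x. f x - g x)) \<ge> 0"
    proof (rule INF_greatest)
      fix \<mu> assume mu: "\<mu> \<in> P"
      show "0 \<le> gen_int \<mu> (\<lambda>x. f x - g x)"
      proof (rule POS)
        show "\<mu> \<in> fa_probs" using mu PF by auto
        fix \<eta> :: real assume "\<eta> > 0"
        then have "{x. f x - g x \<le> - \<eta>} \<in> N" using nul by blast
        then show "\<mu> {x. f x - g x \<le> - \<eta>} = 0" using mu unfolding N_def by blast
      qed
    qed
    then show "R f g" using ch[of f g] by (rule iffD2[rotated])
  qed
  show "induced_by_ideal R" unfolding induced_by_ideal_def
    by (rule exI[of _ N], intro conjI emp un sub UN allI char)
qed

end
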